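(* Let $\mathcal{M}$ be a minimally $k$-level matroid on ground set $E$ and $F$ a $k$-level flacet of $\mathcal{M}$. Then $\overline{F}:=E\setminus F$ satisfies $\operatorname{rk}(\overline{F})=|\overline{F}|$, i.e. $\overline{F}$ is independent.
   Context: Levelness of a matroid $\mathcal{M}=(E,\mathcal{B})$: the least $k$ such that every facet-defining affine function takes at most $k$ distinct values on $V_{\mathcal{M}}=\{\mathbf{1}_B:B\in\mathcal{B}\}$ (facets are inclusion-maximal faces $\{v\in V_{\mathcal{M}}:\ell(v)=0\}\neq V_{\mathcal{M}}$ for affine $\ell\ge0$ on $V_{\mathcal{M}}$). $\mathcal{M}$ is minimally $k$-level if its levelness is $k$ and every proper minor has strictly smaller levelness. A flacet is a flat $\emptyset\neq S\subsetneq E$ such that the restriction $\mathcal{M}|_S$ and contraction $\mathcal{M}/S$ are connected; a flacet $F$ is $k$-level if $\ell_F(x)=\sum_{e\in F}x_e$ takes exactly $k$ distinct values on $V_{\mathcal{M}}$. *)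

theory Defs
  imports Main "HOL-Library.Indicator_Function"
begin

definition matroid :: "'a set \<Rightarrow> 'a set set \<Rightarrow> bool" where
  "matroid E Bs \<longleftrightarrow> finite E \<and> Bs \<noteq> {} \<and> (\<forall>B\<in>Bs. B \<subseteq> E) \<and>
     (\<forall>B1\<in>Bs. \<forall>B2\<in>Bs. \<forall>x\<in>B1 - B2. \<exists>y\<in>B2 - B1. insert y (B1 - {x}) \<in> Bs)"

definition indep :: "'a set set \<Rightarrow> 'a set \<Rightarrow> bool" where
  "indep Bs X \<longleftrightarrow> (\<exists>B\<in>Bs. X \<subseteq> B)"

definition rk :: "'a set set \<Rightarrow> 'a set \<Rightarrow> nat" where
  "rk Bs X = Max (card ` {I. I \<subseteq> X \<and> indep Bs I})"

text \<open>Bases of the restriction M|S (ground set S) and of the contraction M/C (ground set E - C).\<close>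

definition restrict_bases :: "'a set set \<Rightarrow> 'a set \<Rightarrow> 'a set set" where
  "restrict_bases Bs S = {I. I \<subseteq> S \<and> indep Bs I \<and> card I = rk Bs S}"

definition contract_bases :: "'a set set \<Rightarrow> 'a set \<Rightarrow> 'a set set" where
  "contract_bases Bs C = {B - C | B. B \<in> Bs \<and> card (B \<inter> C) = rk Bs C}"

definition proper_minor :: "'a set \<Rightarrow> 'a set set \<Rightarrow> 'a set \<Rightarrow> 'a set set \<Rightarrow> bool" where
  "proper_minor E Bs E' Bs' \<longleftrightarrow>
     (\<exists>C D. C \<subseteq> E \<and> D \<subseteq> E \<and> C \<inter> D = {} \<and> C \<union> D \<noteq> {} \<and>
        E' = E - C - D \<and> Bs' = restrict_bases (contract_bases Bs C) (E - C - D))"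

definition connected_matroid :: "'a set \<Rightarrow> 'a set set \<Rightarrow> bool" where
  "connected_matroid E Bs \<longleftrightarrow>
     \<not> (\<exists>S. S \<noteq> {} \<and> S \<subset> E \<and> rk Bs S + rk Bs (E - S) = rk Bs E)"

definition flat :: "'a set \<Rightarrow> 'a set set \<Rightarrow> 'a set \<Rightarrow> bool" where
  "flat E Bs S \<longleftrightarrow> S \<subseteq> E \<and> (\<forall>e\<in>E - S. rk Bs (insert e S) > rk Bs S)"

definition flacet :: "'a set \<Rightarrow> 'a set set \<Rightarrow> 'a set \<Rightarrow> bool" where
  "flacet E Bs S \<longleftrightarrow> S \<noteq> {} \<and> S \<subset> E \<and> flat E Bs S \<and>
     connected_matroid S (restrict_bases Bs S) \<and>
     connected_matroid (E - S) (contract_bases Bs S)"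

definition vertices :: "'a set set \<Rightarrow> ('a \<Rightarrow> real) set" where
  "vertices Bs = (\<lambda>B. indicator B) ` Bs"

definition aff :: "'a set \<Rightarrow> ('a \<Rightarrow> real) \<Rightarrow> real \<Rightarrow> ('a \<Rightarrow> real) \<Rightarrow> real" where
  "aff E a c x = c + (\<Sum>e\<in>E. a e * x e)"

definition is_face :: "'a set \<Rightarrow> ('a \<Rightarrow> real) set \<Rightarrow> ('a \<Rightarrow> real) set \<Rightarrow> bool" where
  "is_face E V Z \<longleftrightarrow> (\<exists>a c. (\<forall>v\<in>V. aff E a c v \<ge> 0) \<and> Z = {v\<in>V. aff E a c v = 0})"

definition is_facet :: "'a set \<Rightarrow> ('a \<Rightarrow> real) set \<Rightarrow> ('a \<Rightarrow> real) set \<Rightarrow> bool" where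
  "is_facet E V Z \<longleftrightarrow> is_face E V Z \<and> Z \<noteq> V \<and>
     (\<forall>Z'. is_face E V Z' \<and> Z' \<noteq> V \<and> Z \<subseteq> Z' \<longrightarrow> Z' = Z)"

definition facet_defining :: "'a set \<Rightarrow> ('a \<Rightarrow> real) set \<Rightarrow> ('a \<Rightarrow> real) \<Rightarrow> real \<Rightarrow> bool" where
  "facet_defining E V a c \<longleftrightarrow> (\<forall>v\<in>V. aff E a c v \<ge> 0) \<and> is_facet E V {v\<in>V. aff E a c v = 0}"

definition levelness :: "'a set \<Rightarrow> 'a set set \<Rightarrow> nat" where
  "levelness E Bs = (LEAST k. \<forall>a c. facet_defining E (vertices Bs) a c \<longrightarrow>
                        card (aff E a c ` vertices Bs) \<le> k)"

definition minimally_level :: "'a set \<Rightarrow> 'a set set \<Rightarrow> nat \<Rightarrow> bool" where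
  "minimally_level E Bs k \<longleftrightarrow> levelness E Bs = k \<and>
     (\<forall>E' Bs'. proper_minor E Bs E' Bs' \<longrightarrow> levelness E' Bs' < k)"

definition k_level_flacet :: "'a set \<Rightarrow> 'a set set \<Rightarrow> nat \<Rightarrow> 'a set \<Rightarrow> bool" where
  "k_level_flacet E Bs k F \<longleftrightarrow> flacet E Bs F \<and>
     card ((\<lambda>x. \<Sum>e\<in>F. x e) ` vertices Bs) = k"

end

theory Submission
  imports Defs
begin


locale mat =
  fixes E :: "'a set" and Bs :: "'a set set"
  assumes m: "matroid E Bs"
begin

lemma finE: "finite E" and ne: "Bs \<noteq> {}" and subE: "B \<in> Bs \<Longrightarrow> B \<subseteq> E"
  and exch: "B1\<in>Bs \<Longrightarrow> B2\<in>Bs \<Longrightarrow> x\<in>B1-B2 \<Longrightarrow> \<exists>y\<in>B2-B1. insert y (B1 - {x}) \<in> Bs"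
  using m unfolding matroid_def by auto

lemma finB: "B \<in> Bs \<Longrightarrow> finite B"
  using finE subE finite_subset by blast

lemma card_eq_aux: "B1\<in>Bs \<Longrightarrow> B2\<in>Bs \<Longrightarrow> card (B1-B2) = n \<Longrightarrow> card B1 = card B2"
proof (induction n arbitrary: B1)
  case 0
  then have "B1 \<subseteq> B2" using finB by auto
  moreover have "B2 \<subseteq> B1"
  proof
    fix x assume "x \<in> B2"
    show "x \<in> B1"
    proof (rule ccontr)
      assume "x \<notin> B1"
      then obtain y where "y \<in> B1 - B2" using exch[OF 0(2) 0(1), of x] \<open>x\<in>B2\<close> by auto
      then show False using \<open>B1 \<subseteq> B2\<close> by auto
    qed
  qed
  ultimately show ?case by simp
next
  case (Suc n)
  have "B1 - B2 \<noteq> {}" using Suc(4) by (metis card.empty nat.simps(3))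
  then obtain x where x: "x \<in> B1 - B2" by blast
  then obtain y where y: "y \<in> B2 - B1" and B1': "insert y (B1 - {x}) \<in> Bs"
    using exch[OF Suc(2) Suc(3)] by blast
  have "insert y (B1 - {x}) - B2 = (B1 - B2) - {x}" using x y by auto
  then have "card (insert y (B1 - {x}) - B2) = n" using Suc(4) x finB[OF Suc(2)] by simp
  then have "card (insert y (B1 - {x})) = card B2" using Suc.IH[OF B1' Suc(3)] by simp
  moreover have "card (insert y (B1 - {x})) = card B1"
  proof -
    have "card B1 > 0" using x finB[OF Suc(2)] card_gt_0_iff by blast
    then show ?thesis using x y finB[OF Suc(2)] by simp
  qed
  ultimately show ?case by simp
qed

lemma card_eq: "B1\<in>Bs \<Longrightarrow> B2\<in>Bs \<Longrightarrow> card B1 = card B2"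
  using card_eq_aux by blast

lemma indep_sub: "indep Bs I \<Longrightarrow> J \<subseteq> I \<Longrightarrow> indep Bs J"
  unfolding indep_def by blast

lemma indep_E: "indep Bs I \<Longrightarrow> I \<subseteq> E"
  unfolding indep_def using subE by blast

lemma indep_fin: "indep Bs I \<Longrightarrow> finite I"
  using indep_E finE finite_subset by blast

lemma indep_empty: "indep Bs {}"
  using ne unfolding indep_def by blast

lemma base_indep: "B \<in> Bs \<Longrightarrow> indep Bs B"
  unfolding indep_def by blast

lemma indep_card: "indep Bs I \<Longrightarrow> B \<in> Bs \<Longrightarrow> card I \<le> card B"
proof -
  assume "indep Bs I" "B \<in> Bs"
  then obtain B0 where "B0 \<in> Bs" "I \<subseteq> B0" unfolding indep_def by blast
  then show ?thesis using card_eq[OF \<open>B0 \<in> Bs\<close> \<open>B \<in> Bs\<close>] card_mono[OF finB[OF \<open>B0 \<in> Bs\<close>]] by simp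
qed

lemma indep_base: "indep Bs I \<Longrightarrow> B \<in> Bs \<Longrightarrow> card I = card B \<Longrightarrow> I \<in> Bs"
proof -
  assume "indep Bs I" "B \<in> Bs" "card I = card B"
  then obtain B0 where "B0 \<in> Bs" "I \<subseteq> B0" unfolding indep_def by blast
  then have "I = B0" using card_eq[OF \<open>B0 \<in> Bs\<close> \<open>B \<in> Bs\<close>] card_subset_eq[OF finB[OF \<open>B0 \<in> Bs\<close>]] \<open>card I = card B\<close> by simp
  then show ?thesis using \<open>B0 \<in> Bs\<close> by simp
qed

lemma augment:
  assumes I: "indep Bs I" and J: "indep Bs J" and lt: "card I < card J"
  shows "\<exists>y\<in>J-I. indep Bs (insert y I)"
proof (rule ccontr)
  assume na: "\<not> ?thesis"
  let ?P = "\<lambda>(B1,B2). B1 \<in> Bs \<and> B2 \<in> Bs \<and> I \<subseteq> B1 \<and> J \<subseteq> B2"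
  obtain B1 B2 where "B1 \<in> Bs" "I \<subseteq> B1" "B2 \<in> Bs" "J \<subseteq> B2" using I J unfolding indep_def by blast
  then have "?P (B1,B2)" by simp
  from ex_has_least_nat[of ?P, OF this, of "\<lambda>(B1,B2). card (B2 - B1)"]
  obtain p where p: "?P p" and pmin: "\<forall>q. ?P q \<longrightarrow> (\<lambda>(B1,B2). card (B2 - B1)) p \<le> (\<lambda>(B1,B2). card (B2 - B1)) q"
    by blast
  obtain C1 C2 where pc: "p = (C1,C2)" by (cases p)
  have C1: "C1 \<in> Bs" "I \<subseteq> C1" and C2: "C2 \<in> Bs" "J \<subseteq> C2" using p pc by auto
  have a: "(J - I) \<inter> C1 = {}"
  proof (rule ccontr)
    assume "(J - I) \<inter> C1 \<noteq> {}"
    then obtain y where "y \<in> J - I" "y \<in> C1" by blast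
    then have "indep Bs (insert y I)" using C1 unfolding indep_def by blast
    then show False using na \<open>y \<in> J - I\<close> by blast
  qed
  have b: "C1 - I \<subseteq> C2"
  proof
    fix x assume x: "x \<in> C1 - I"
    show "x \<in> C2"
    proof (rule ccontr)
      assume "x \<notin> C2"
      then obtain y where y: "y \<in> C2 - C1" and C1': "insert y (C1 - {x}) \<in> Bs"
        using exch[OF C1(1) C2(1), of x] x by blast
      have "?P (insert y (C1 - {x}), C2)" using C1' C2 C1 x by auto
      then have le: "card (C2 - C1) \<le> card (C2 - insert y (C1 - {x}))" using pmin pc by fastforce
      have "C2 - insert y (C1 - {x}) = (C2 - C1) - {y}" using x \<open>x \<notin> C2\<close> by auto
      moreover have "finite (C2 - C1)" using finB[OF C2(1)] by simp
      ultimately have "card (C2 - insert y (C1 - {x})) < card (C2 - C1)"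
        using y by (metis card_Diff1_less)
      then show False using le by simp
    qed
  qed
  have c: "C1 - I \<subseteq> C2 - J" using a b by blast
  have fI: "finite I" using I indep_fin by blast
  have "card C1 = card I + card (C1 - I)" using C1 finB[OF C1(1)] fI card_Diff_subset[of I C1] card_mono[of C1 I] by simp
  also have "\<dots> \<le> card I + card (C2 - J)" using c finB[OF C2(1)] by (simp add: card_mono)
  also have "\<dots> < card J + card (C2 - J)" using lt by simp
  also have "\<dots> = card C2" using C2 finB[OF C2(1)] card_Diff_subset[of J C2] card_mono[of C2 J] finite_subset[of J C2] by simp
  finally show False using card_eq[OF C1(1) C2(1)] by simp
qed

lemma rk_fin: "finite (card ` {I. I \<subseteq> X \<and> indep Bs I})"
proof -
  have "{I. I \<subseteq> X \<and> indep Bs I} \<subseteq> Pow E" using indep_E by auto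
  then have "finite {I. I \<subseteq> X \<and> indep Bs I}" using finE by (simp add: finite_subset)
  then show ?thesis by simp
qed

lemma rk_ge: "I \<subseteq> X \<Longrightarrow> indep Bs I \<Longrightarrow> card I \<le> rk Bs X"
  unfolding rk_def using rk_fin by (intro Max_ge) auto

lemma rk_obtain: "\<exists>I. I \<subseteq> X \<and> indep Bs I \<and> card I = rk Bs X"
proof -
  have "card ` {I. I \<subseteq> X \<and> indep Bs I} \<noteq> {}" using indep_empty by blast
  from Max_in[OF rk_fin this] show ?thesis unfolding rk_def by auto
qed

lemma rk_mono: "X \<subseteq> Y \<Longrightarrow> rk Bs X \<le> rk Bs Y"
proof -
  assume "X \<subseteq> Y"
  obtain I where "I \<subseteq> X" "indep Bs I" "card I = rk Bs X" using rk_obtain by blast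
  then show ?thesis using rk_ge[of I Y] \<open>X \<subseteq> Y\<close> by simp
qed

lemma rk_le_card: "finite X \<Longrightarrow> rk Bs X \<le> card X"
proof -
  assume "finite X"
  obtain I where "I \<subseteq> X" "indep Bs I" "card I = rk Bs X" using rk_obtain by blast
  then show ?thesis using card_mono[OF \<open>finite X\<close> \<open>I \<subseteq> X\<close>] by simp
qed

lemma rk_empty: "rk Bs {} = 0"
  using rk_le_card[of "{}"] by simp

lemma rk_base: "B \<in> Bs \<Longrightarrow> rk Bs X \<le> card B"
proof -
  assume "B \<in> Bs"
  obtain I where "I \<subseteq> X" "indep Bs I" "card I = rk Bs X" using rk_obtain by blast
  then show ?thesis using indep_card[OF \<open>indep Bs I\<close> \<open>B \<in> Bs\<close>] by simp
qed

lemma rk_E: "B \<in> Bs \<Longrightarrow> rk Bs E = card B"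
proof -
  assume B: "B \<in> Bs"
  have "card B \<le> rk Bs E" using rk_ge[OF subE[OF B] base_indep[OF B]] .
  then show ?thesis using rk_base[OF B, of E] by simp
qed

lemma rk_ext:
  assumes "I \<subseteq> X" "indep Bs I"
  shows "\<exists>J. I \<subseteq> J \<and> J \<subseteq> X \<and> indep Bs J \<and> card J = rk Bs X"
proof -
  let ?P = "\<lambda>J. I \<subseteq> J \<and> J \<subseteq> X \<and> indep Bs J"
  obtain B where B: "B \<in> Bs" using ne by blast
  have bnd: "\<forall>y. ?P y \<longrightarrow> card y < card B + 1"
  proof (intro allI impI)
    fix y assume "?P y"
    then have "card y \<le> card B" using indep_card[OF _ B] by blast
    then show "card y < card B + 1" by simp
  qed
  have PI: "?P I" using assms by simp
  obtain J where J: "?P J" and Jmax: "\<forall>y. ?P y \<longrightarrow> card y \<le> card J"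
    using ex_has_greatest_nat[of ?P I card, OF PI bnd] by blast
  have "card J = rk Bs X"
  proof (rule ccontr)
    assume ne1: "card J \<noteq> rk Bs X"
    have "card J \<le> rk Bs X" using J rk_ge by blast
    then have lt: "card J < rk Bs X" using ne1 by simp
    obtain K where K: "K \<subseteq> X" "indep Bs K" "card K = rk Bs X" using rk_obtain by blast
    have "card J < card K" using lt K(3) by simp
    then obtain y where y: "y \<in> K - J" "indep Bs (insert y J)" using augment[of J K] J K(2) by blast
    then have "?P (insert y J)" using J K(1) by blast
    then have "card (insert y J) \<le> card J" using Jmax by blast
    moreover have "card (insert y J) = card J + 1" using y(1) indep_fin[of J] J by simp
    ultimately show False by simp
  qed
  then show ?thesis using J by blast
qed

lemma rk_insert: "rk Bs (insert e X) \<le> rk Bs X + 1"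
proof -
  obtain I where I: "I \<subseteq> insert e X" "indep Bs I" "card I = rk Bs (insert e X)" using rk_obtain by blast
  have "I - {e} \<subseteq> X" using I(1) by blast
  moreover have "indep Bs (I - {e})" using indep_sub[OF I(2)] by blast
  ultimately have "card (I - {e}) \<le> rk Bs X" using rk_ge by blast
  moreover have "card I \<le> card (I - {e}) + 1"
  proof (cases "e \<in> I")
    case True
    then show ?thesis using indep_fin[OF I(2)] card_Diff1_le card_Suc_Diff1[of I e] by simp
  next
    case False
    then show ?thesis by simp
  qed
  ultimately show ?thesis using I(3) by simp
qed

lemma submod: "rk Bs (X \<union> Y) + rk Bs (X \<inter> Y) \<le> rk Bs X + rk Bs Y"
proof -
  obtain I where I: "I \<subseteq> X \<inter> Y" "indep Bs I" "card I = rk Bs (X \<inter> Y)" using rk_obtain by blast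
  have "I \<subseteq> X \<union> Y" using I(1) by blast
  then obtain J where J: "I \<subseteq> J" "J \<subseteq> X \<union> Y" "indep Bs J" "card J = rk Bs (X \<union> Y)"
    using rk_ext[of I "X \<union> Y"] I(2) by blast
  have fJ: "finite J" using J(3) indep_fin by blast
  have s1: "J \<inter> (X \<inter> Y) \<subseteq> X \<inter> Y" by blast
  have s2: "indep Bs (J \<inter> (X \<inter> Y))" using indep_sub[OF J(3)] by blast
  have "card (J \<inter> (X \<inter> Y)) \<le> card I" using rk_ge[OF s1 s2] I(3) by simp
  moreover have "I \<subseteq> J \<inter> (X \<inter> Y)" using I(1) J(1) by blast
  moreover have "finite (J \<inter> (X \<inter> Y))" using fJ by simp
  ultimately have eqI: "J \<inter> (X \<inter> Y) = I" using card_seteq[of "J \<inter> (X \<inter> Y)" I] by blast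
  have "card (J \<inter> X) + card (J \<inter> Y) = card ((J \<inter> X) \<union> (J \<inter> Y)) + card ((J \<inter> X) \<inter> (J \<inter> Y))"
    using fJ by (intro card_Un_Int) auto
  moreover have "(J \<inter> X) \<union> (J \<inter> Y) = J" using J(2) by blast
  moreover have "(J \<inter> X) \<inter> (J \<inter> Y) = I" using eqI by blast
  moreover have "card (J \<inter> X) \<le> rk Bs X" using rk_ge[of "J \<inter> X" X] indep_sub[OF J(3)] by blast
  moreover have "card (J \<inter> Y) \<le> rk Bs Y" using rk_ge[of "J \<inter> Y" Y] indep_sub[OF J(3)] by blast
  ultimately show ?thesis using I(3) J(4) by simp
qed

end


context mat begin

lemma base_ext:
  assumes J: "indep Bs J" and B: "B \<in> Bs"
  shows "\<exists>B'\<in>Bs. J \<subseteq> B' \<and> B' \<subseteq> J \<union> B"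
proof -
  obtain J' where J': "J \<subseteq> J'" "J' \<subseteq> J \<union> B" "indep Bs J'" "card J' = rk Bs (J \<union> B)"
    using rk_ext[of J "J \<union> B"] J by blast
  have "card B \<le> rk Bs (J \<union> B)" using rk_ge[of B "J \<union> B"] base_indep[OF B] by blast
  moreover have "card J' \<le> card B" using indep_card[OF J'(3) B] .
  ultimately have "card J' = card B" using J'(4) by simp
  then have "J' \<in> Bs" using indep_base[OF J'(3) B] by simp
  then show ?thesis using J' by blast
qed

lemma indep_le_rk: "indep Bs I \<Longrightarrow> I \<subseteq> C \<Longrightarrow> card I \<le> rk Bs C"
  using rk_ge by blast

lemma L1:
  assumes B: "B \<in> Bs" and cB: "card (B \<inter> C) = rk Bs C"
    and J: "J \<subseteq> C" "indep Bs J" "card J = rk Bs C"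
  shows "(B - C) \<union> J \<in> Bs"
proof -
  obtain B' where B': "B' \<in> Bs" "J \<subseteq> B'" "B' \<subseteq> J \<union> B" using base_ext[OF J(2) B] by blast
  have fB': "finite B'" using finB[OF B'(1)] .
  have fB: "finite B" using finB[OF B] .
  have iB: "indep Bs (B' \<inter> C)" using base_indep[OF B'(1)] indep_sub by blast
  have "card (B' \<inter> C) \<le> card J" using rk_ge[OF Int_lower2 iB] J(3) by simp
  moreover have "J \<subseteq> B' \<inter> C" using J(1) B'(2) by blast
  ultimately have BC: "B' \<inter> C = J" using card_seteq[of "B' \<inter> C" J] fB' by blast
  have "card B' = card (B' \<inter> C) + card (B' - C)" using fB' card_Int_Diff by blast
  moreover have "card B = card (B \<inter> C) + card (B - C)" using fB card_Int_Diff by blast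
  moreover have "card B' = card B" using card_eq[OF B'(1) B] .
  ultimately have "card (B' - C) = card (B - C)" using BC J(3) cB by simp
  moreover have "B' - C \<subseteq> B - C" using B'(3) J(1) by blast
  ultimately have "B' - C = B - C" using card_subset_eq[of "B - C" "B' - C"] fB by blast
  then have "B' = (B - C) \<union> J" using BC by blast
  then show ?thesis using B'(1) by simp
qed

lemma exists_max_base:
  "\<exists>B\<in>Bs. card (B \<inter> C) = rk Bs C"
proof -
  obtain J where J: "J \<subseteq> C" "indep Bs J" "card J = rk Bs C" using rk_obtain by blast
  obtain B0 where B0: "B0 \<in> Bs" using ne by blast
  obtain B where B: "B \<in> Bs" "J \<subseteq> B" using base_ext[OF J(2) B0] by blast
  have "indep Bs (B \<inter> C)" using base_indep[OF B(1)] indep_sub by blast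
  then have "card (B \<inter> C) \<le> rk Bs C" using rk_ge by blast
  moreover have "card J \<le> card (B \<inter> C)" using J(1) B(2) finB[OF B(1)] by (intro card_mono) auto
  ultimately show ?thesis using J(3) B(1) by force
qed

lemma restrict_indep: "indep (restrict_bases Bs S) X \<longleftrightarrow> X \<subseteq> S \<and> indep Bs X"
proof
  assume "indep (restrict_bases Bs S) X"
  then obtain I where I: "I \<in> restrict_bases Bs S" "X \<subseteq> I" unfolding indep_def by blast
  then have "I \<subseteq> S" "indep Bs I" unfolding restrict_bases_def by auto
  then show "X \<subseteq> S \<and> indep Bs X" using indep_sub[of I X] I(2) by auto
next
  assume a: "X \<subseteq> S \<and> indep Bs X"
  then obtain J where J: "X \<subseteq> J" "J \<subseteq> S" "indep Bs J" "card J = rk Bs S" using rk_ext[of X S] by auto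
  then have "J \<in> restrict_bases Bs S" unfolding restrict_bases_def by simp
  then show "indep (restrict_bases Bs S) X" unfolding indep_def using J(1) by auto
qed

lemma restrict_rk: "rk (restrict_bases Bs S) X = rk Bs (X \<inter> S)"
proof -
  have "{I. I \<subseteq> X \<and> indep (restrict_bases Bs S) I} = {I. I \<subseteq> X \<inter> S \<and> indep Bs I}"
    unfolding restrict_indep by auto
  then show ?thesis unfolding rk_def by simp
qed

lemma restrict_matroid:
  assumes "S \<subseteq> E" shows "matroid S (restrict_bases Bs S)"
  unfolding matroid_def
proof (intro conjI ballI)
  show "finite S" using assms finE finite_subset by blast
  show "restrict_bases Bs S \<noteq> {}" using rk_obtain[of S] unfolding restrict_bases_def by blast
  fix B assume "B \<in> restrict_bases Bs S" then show "B \<subseteq> S" unfolding restrict_bases_def by blast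
next
  fix B1 B2 x assume B1: "B1 \<in> restrict_bases Bs S" and B2: "B2 \<in> restrict_bases Bs S" and x: "x \<in> B1 - B2"
  have i1: "indep Bs (B1 - {x})" using B1 indep_sub unfolding restrict_bases_def by blast
  have f1: "finite B1" using B1 indep_fin unfolding restrict_bases_def by blast
  have c1: "card (B1 - {x}) = rk Bs S - 1" using B1 x f1 unfolding restrict_bases_def by simp
  have c1': "card B1 = rk Bs S" using B1 unfolding restrict_bases_def by simp
  have pos: "card B1 > 0" using f1 x card_gt_0_iff by blast
  have "card (B1 - {x}) < card B2" using B2 c1 c1' pos unfolding restrict_bases_def by simp
  then obtain y where y: "y \<in> B2 - (B1 - {x})" "indep Bs (insert y (B1 - {x}))"
    using augment[OF i1, of B2] B2 unfolding restrict_bases_def by blast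
  have yx: "y \<noteq> x" using y x by blast
  have "card (insert y (B1 - {x})) = rk Bs S" using y(1) c1 pos c1' f1 by simp
  moreover have "insert y (B1 - {x}) \<subseteq> S" using B1 B2 y(1) unfolding restrict_bases_def by blast
  ultimately have "insert y (B1 - {x}) \<in> restrict_bases Bs S" using y(2) unfolding restrict_bases_def by blast
  moreover have "y \<in> B2 - B1" using y(1) yx by blast
  ultimately show "\<exists>y\<in>B2 - B1. insert y (B1 - {x}) \<in> restrict_bases Bs S" by blast
qed

lemma contract_matroid:
  assumes C: "C \<subseteq> E" shows "matroid (E - C) (contract_bases Bs C)"
  unfolding matroid_def
proof (intro conjI ballI)
  show "finite (E - C)" using finE by simp
  show "contract_bases Bs C \<noteq> {}" using exists_max_base[of C] unfolding contract_bases_def by blast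
  fix K assume "K \<in> contract_bases Bs C" then show "K \<subseteq> E - C" unfolding contract_bases_def using subE by blast
next
  fix K1 K2 x assume K1: "K1 \<in> contract_bases Bs C" and K2: "K2 \<in> contract_bases Bs C" and x: "x \<in> K1 - K2"
  obtain B1 where B1: "B1 \<in> Bs" "card (B1 \<inter> C) = rk Bs C" "K1 = B1 - C" using K1 unfolding contract_bases_def by blast
  obtain B2 where B2: "B2 \<in> Bs" "card (B2 \<inter> C) = rk Bs C" "K2 = B2 - C" using K2 unfolding contract_bases_def by blast
  have J: "B1 \<inter> C \<subseteq> C" "indep Bs (B1 \<inter> C)" using base_indep[OF B1(1)] indep_sub by auto
  have B2': "(B2 - C) \<union> (B1 \<inter> C) \<in> Bs" using L1[OF B2(1) B2(2) J B1(2)] .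
  have "x \<in> B1 - ((B2 - C) \<union> (B1 \<inter> C))" using x B1(3) B2(3) by blast
  then obtain y where y: "y \<in> ((B2 - C) \<union> (B1 \<inter> C)) - B1" and B1': "insert y (B1 - {x}) \<in> Bs"
    using exch[OF B1(1) B2'] by blast
  have yC: "y \<notin> C" using y by blast
  have xC: "x \<notin> C" using x B1(3) by blast
  have "insert y (B1 - {x}) \<inter> C = B1 \<inter> C" using yC xC by blast
  then have "card (insert y (B1 - {x}) \<inter> C) = rk Bs C" using B1(2) by simp
  moreover have "insert y (B1 - {x}) - C = insert y (K1 - {x})" using yC B1(3) by blast
  ultimately have "insert y (K1 - {x}) \<in> contract_bases Bs C" using B1' unfolding contract_bases_def by blast
  moreover have "y \<in> K2 - K1" using y B1(3) B2(3) by blast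
  ultimately show "\<exists>y\<in>K2 - K1. insert y (K1 - {x}) \<in> contract_bases Bs C" by blast
qed

lemma contract_rk:
  assumes C: "C \<subseteq> E" and XC: "X \<inter> C = {}"
  shows "rk (contract_bases Bs C) X + rk Bs C = rk Bs (X \<union> C)"
proof -
  interpret c: mat "E - C" "contract_bases Bs C" using contract_matroid[OF C] by unfold_locales
  show ?thesis
  proof (rule antisym)
    obtain I where I: "I \<subseteq> X" "indep (contract_bases Bs C) I" "card I = rk (contract_bases Bs C) X"
      using c.rk_obtain by blast
    obtain K where K: "K \<in> contract_bases Bs C" "I \<subseteq> K" using I(2) unfolding indep_def by blast
    obtain B where B: "B \<in> Bs" "card (B \<inter> C) = rk Bs C" "K = B - C" using K(1) unfolding contract_bases_def by blast
    have sub: "I \<union> (B \<inter> C) \<subseteq> B" using K(2) B(3) by blast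
    have ind: "indep Bs (I \<union> (B \<inter> C))" using indep_sub[OF base_indep[OF B(1)] sub] .
    have fin: "finite B" using finB[OF B(1)] .
    have "I \<inter> (B \<inter> C) = {}" using I(1) XC by blast
    moreover have "finite I" "finite (B \<inter> C)" using sub fin finite_subset by auto
    ultimately have "card (I \<union> (B \<inter> C)) = card I + card (B \<inter> C)" by (simp add: card_Un_disjoint)
    moreover have "I \<union> (B \<inter> C) \<subseteq> X \<union> C" using I(1) by blast
    ultimately have "card I + card (B \<inter> C) \<le> rk Bs (X \<union> C)" using rk_ge[OF _ ind] by simp
    then show "rk (contract_bases Bs C) X + rk Bs C \<le> rk Bs (X \<union> C)" using I(3) B(2) by simp
  next
    obtain J where J: "J \<subseteq> C" "indep Bs J" "card J = rk Bs C" using rk_obtain by blast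
    have "J \<subseteq> X \<union> C" using J(1) by blast
    then obtain J' where J': "J \<subseteq> J'" "J' \<subseteq> X \<union> C" "indep Bs J'" "card J' = rk Bs (X \<union> C)"
      using rk_ext[OF _ J(2)] by blast
    obtain B0 where B0: "B0 \<in> Bs" "J' \<subseteq> B0" using J'(3) unfolding indep_def by blast
    have fB0: "finite B0" using finB[OF B0(1)] .
    have iB0: "indep Bs (B0 \<inter> C)" using indep_sub[OF base_indep[OF B0(1)]] by blast
    have "card (B0 \<inter> C) \<le> rk Bs C" using rk_ge[OF Int_lower2 iB0] .
    moreover have "card J \<le> card (B0 \<inter> C)" using J(1) J'(1) B0(2) fB0 by (intro card_mono) auto
    ultimately have "card (B0 \<inter> C) = rk Bs C" using J(3) by simp
    then have KB: "B0 - C \<in> contract_bases Bs C" using B0(1) unfolding contract_bases_def by blast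
    let ?I = "J' - C"
    have "?I \<subseteq> B0 - C" using B0(2) by blast
    then have iI: "indep (contract_bases Bs C) ?I" using KB unfolding indep_def by blast
    have IX: "?I \<subseteq> X" using J'(2) by blast
    have fJ': "finite J'" using fB0 B0(2) finite_subset by blast
    have iJC: "indep Bs (J' \<inter> C)" using indep_sub[OF J'(3)] by blast
    have "card (J' \<inter> C) \<le> rk Bs C" using rk_ge[OF Int_lower2 iJC] .
    moreover have "card J \<le> card (J' \<inter> C)" using J(1) J'(1) fJ' by (intro card_mono) auto
    ultimately have cJC: "card (J' \<inter> C) = rk Bs C" using J(3) by simp
    have "card J' = card (J' \<inter> C) + card ?I" using fJ' card_Int_Diff by blast
    then have "card ?I + rk Bs C = rk Bs (X \<union> C)" using cJC J'(4) by simp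
    moreover have "card ?I \<le> rk (contract_bases Bs C) X" using c.rk_ge[OF IX iI] .
    ultimately show "rk Bs (X \<union> C) \<le> rk (contract_bases Bs C) X + rk Bs C" by simp
  qed
qed

end


context mat begin

lemma ivt_aux:
  "B1 \<in> Bs \<Longrightarrow> B2 \<in> Bs \<Longrightarrow> card (B1 - B2) = n \<Longrightarrow>
   min (card (B1 \<inter> F)) (card (B2 \<inter> F)) \<le> v \<Longrightarrow> v \<le> max (card (B1 \<inter> F)) (card (B2 \<inter> F)) \<Longrightarrow>
   \<exists>B\<in>Bs. card (B \<inter> F) = v"
proof (induction n arbitrary: B1)
  case 0
  then have "B1 \<subseteq> B2" using finB by auto
  then have "B1 = B2" using card_eq[OF 0(1) 0(2)] card_subset_eq[OF finB[OF 0(2)]] by simp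
  then show ?case using 0 by auto
next
  case (Suc n)
  have "B1 - B2 \<noteq> {}" using Suc(4) by (metis card.empty nat.simps(3))
  then obtain x where x: "x \<in> B1 - B2" by blast
  then obtain y where y: "y \<in> B2 - B1" and B1': "insert y (B1 - {x}) \<in> Bs"
    using exch[OF Suc(2) Suc(3)] by blast
  let ?B = "insert y (B1 - {x})"
  have "?B - B2 = (B1 - B2) - {x}" using x y by auto
  then have cn: "card (?B - B2) = n" using Suc(4) x finB[OF Suc(2)] by simp
  have f1: "finite (B1 \<inter> F)" using finB[OF Suc(2)] by simp
  have a: "card (?B \<inter> F) \<le> card (B1 \<inter> F) + 1"
  proof -
    have "?B \<inter> F \<subseteq> insert y (B1 \<inter> F)" by blast
    then have "card (?B \<inter> F) \<le> card (insert y (B1 \<inter> F))" using f1 by (intro card_mono) auto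
    also have "\<dots> \<le> card (B1 \<inter> F) + 1" using f1 by (simp add: card_insert_if)
    finally show ?thesis .
  qed
  have b: "card (B1 \<inter> F) \<le> card (?B \<inter> F) + 1"
  proof -
    have "B1 \<inter> F \<subseteq> insert x (?B \<inter> F)" by blast
    moreover have "finite (?B \<inter> F)" using finB[OF B1'] by simp
    ultimately have "card (B1 \<inter> F) \<le> card (insert x (?B \<inter> F))" by (intro card_mono) auto
    also have "\<dots> \<le> card (?B \<inter> F) + 1" using \<open>finite (?B \<inter> F)\<close> by (simp add: card_insert_if)
    finally show ?thesis .
  qed
  show ?case
  proof (cases "min (card (?B \<inter> F)) (card (B2 \<inter> F)) \<le> v \<and> v \<le> max (card (?B \<inter> F)) (card (B2 \<inter> F))")
    case True
    then show ?thesis using Suc.IH[OF B1' Suc(3) cn] by blast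
  next
    case False
    then have "v = card (B1 \<inter> F)" using a b Suc(5) Suc(6) by linarith
    then show ?thesis using Suc(2) by blast
  qed
qed

lemma values_interval:
  assumes F: "F \<subseteq> E"
  shows "(\<lambda>B. card (B \<inter> F)) ` Bs = {rk Bs E - rk Bs (E - F) .. rk Bs F}"
proof
  show "(\<lambda>B. card (B \<inter> F)) ` Bs \<subseteq> {rk Bs E - rk Bs (E - F) .. rk Bs F}"
  proof
    fix v assume "v \<in> (\<lambda>B. card (B \<inter> F)) ` Bs"
    then obtain B where B: "B \<in> Bs" "v = card (B \<inter> F)" by blast
    have i1: "indep Bs (B \<inter> F)" using indep_sub[OF base_indep[OF B(1)]] by blast
    have i2: "indep Bs (B - F)" using indep_sub[OF base_indep[OF B(1)]] by blast
    have "card (B \<inter> F) \<le> rk Bs F" using rk_ge[OF Int_lower2 i1] .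
    moreover have "B - F \<subseteq> E - F" using subE[OF B(1)] by blast
    then have "card (B - F) \<le> rk Bs (E - F)" using rk_ge[OF _ i2] by blast
    moreover have "card B = card (B \<inter> F) + card (B - F)" using finB[OF B(1)] card_Int_Diff by blast
    moreover have "card B = rk Bs E" using rk_E[OF B(1)] by simp
    ultimately show "v \<in> {rk Bs E - rk Bs (E - F) .. rk Bs F}" using B(2) by simp
  qed
next
  show "{rk Bs E - rk Bs (E - F) .. rk Bs F} \<subseteq> (\<lambda>B. card (B \<inter> F)) ` Bs"
  proof
    fix v assume v: "v \<in> {rk Bs E - rk Bs (E - F) .. rk Bs F}"
    obtain B1 where B1: "B1 \<in> Bs" "card (B1 \<inter> F) = rk Bs F" using exists_max_base by blast
    obtain B2 where B2: "B2 \<in> Bs" "card (B2 \<inter> (E - F)) = rk Bs (E - F)" using exists_max_base by blast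
    have "B2 \<inter> (E - F) = B2 - F" using subE[OF B2(1)] by blast
    moreover have "card B2 = card (B2 \<inter> F) + card (B2 - F)" using finB[OF B2(1)] card_Int_Diff by blast
    moreover have "card B2 = rk Bs E" using rk_E[OF B2(1)] by simp
    ultimately have "card (B2 \<inter> F) = rk Bs E - rk Bs (E - F)" using B2(2) by simp
    then obtain B where "B \<in> Bs" "card (B \<inter> F) = v"
      using ivt_aux[OF B1(1) B2(1) refl, of F v] v B1(2) by auto
    then show "v \<in> (\<lambda>B. card (B \<inter> F)) ` Bs" by blast
  qed
qed

lemma card_values:
  assumes F: "F \<subseteq> E"
  shows "card ((\<lambda>x. \<Sum>e\<in>F. x e) ` vertices Bs) = rk Bs F + 1 - (rk Bs E - rk Bs (E - F))"
proof -
  have fF: "finite F" using F finE finite_subset by blast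
  have "(\<lambda>x. \<Sum>e\<in>F. x e) ` vertices Bs = (\<lambda>n. real n) ` ((\<lambda>B. card (B \<inter> F)) ` Bs)"
  proof -
    have h: "(\<Sum>e\<in>F. (indicator B e :: real)) = real (card (B \<inter> F))" for B
      unfolding indicator_def using sum.inter_restrict[OF fF, of "\<lambda>_. (1::real)" B] by (simp add: Int_commute of_bool_def)
    show ?thesis unfolding vertices_def image_comp comp_def using h by simp
  qed
  then have "card ((\<lambda>x. \<Sum>e\<in>F. x e) ` vertices Bs) = card ((\<lambda>B. card (B \<inter> F)) ` Bs)"
    by (simp add: card_image)
  then show ?thesis using values_interval[OF F] by simp
qed

definition exrel :: "('a \<times> 'a) set" where
  "exrel = {(x,y). \<exists>B\<in>Bs. x \<in> B \<and> y \<in> E - B \<and> insert y (B - {x}) \<in> Bs}"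

lemma exrel_sym: "(x,y) \<in> exrel \<Longrightarrow> (y,x) \<in> exrel"
proof -
  assume "(x,y) \<in> exrel"
  then obtain B where B: "B \<in> Bs" "x \<in> B" "y \<in> E - B" "insert y (B - {x}) \<in> Bs" unfolding exrel_def by blast
  let ?B = "insert y (B - {x})"
  have "insert x (?B - {y}) = B" using B by blast
  moreover have "x \<in> E - ?B" using B subE by blast
  ultimately show "(y,x) \<in> exrel" unfolding exrel_def using B by force
qed

lemma rk_const:
  assumes "\<forall>B\<in>Bs. card (B \<inter> X) = s"
  shows "rk Bs X = s"
proof (rule antisym)
  obtain I where I: "I \<subseteq> X" "indep Bs I" "card I = rk Bs X" using rk_obtain by blast
  obtain B where B: "B \<in> Bs" "I \<subseteq> B" using I(2) unfolding indep_def by blast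
  have "card I \<le> card (B \<inter> X)" using I(1) B(2) finB[OF B(1)] by (intro card_mono) auto
  then show "rk Bs X \<le> s" using I(3) assms B(1) by simp
next
  obtain B where B: "B \<in> Bs" using ne by blast
  have "indep Bs (B \<inter> X)" using indep_sub[OF base_indep[OF B]] by blast
  then show "s \<le> rk Bs X" using rk_ge[OF Int_lower2] assms B by fastforce
qed

lemma conn_exrel:
  assumes conn: "connected_matroid E Bs" and x: "x \<in> E" and y: "y \<in> E"
  shows "(x,y) \<in> exrel\<^sup>*"
proof -
  define T where "T = {z\<in>E. (x,z) \<in> exrel\<^sup>*}"
  have clo1: "b \<in> T" if ab: "(a,b) \<in> exrel" and aT: "a \<in> T" for a b
  proof -
    obtain B where B: "B \<in> Bs" "a \<in> B" "b \<in> E - B" using ab unfolding exrel_def by blast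
    have "(x,a) \<in> exrel\<^sup>*" using aT unfolding T_def by blast
    then have "(x,b) \<in> exrel\<^sup>*" using ab by (rule rtrancl.rtrancl_into_rtrancl)
    then show ?thesis using B(3) unfolding T_def by blast
  qed
  have clo: "a \<in> T \<longleftrightarrow> b \<in> T" if "(a,b) \<in> exrel" for a b
    using clo1[OF that] clo1[OF exrel_sym[OF that]] by blast
  have cT: "card (B1 \<inter> T) = card (B2 \<inter> T)" if "B1 \<in> Bs" "B2 \<in> Bs" "card (B1 - B2) = n" for B1 B2 n
    using that
  proof (induction n arbitrary: B1)
    case 0
    have "B1 - B2 = {}" using 0(3) finB[OF 0(1)] by simp
    then have "B1 \<subseteq> B2" by blast
    then have "B1 = B2" using card_eq[OF 0(1) 0(2)] card_subset_eq[OF finB[OF 0(2)]] by simp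
    then show ?case by simp
  next
    case (Suc n)
    have "B1 - B2 \<noteq> {}" using Suc(4) by (metis card.empty nat.simps(3))
    then obtain u where u: "u \<in> B1 - B2" by blast
    then obtain w where w: "w \<in> B2 - B1" and B1': "insert w (B1 - {u}) \<in> Bs"
      using exch[OF Suc(2) Suc(3)] by blast
    let ?B = "insert w (B1 - {u})"
    have "?B - B2 = (B1 - B2) - {u}" using u w by auto
    then have cn: "card (?B - B2) = n" using Suc(4) u finB[OF Suc(2)] by simp
    have "w \<in> E" using w subE[OF Suc(3)] by blast
    then have "(u,w) \<in> exrel" unfolding exrel_def using Suc(2) u w B1' by blast
    then have uw: "u \<in> T \<longleftrightarrow> w \<in> T" using clo by blast
    have fB1: "finite B1" using finB[OF Suc(2)] .
    have "card (?B \<inter> T) = card (B1 \<inter> T)"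
    proof (cases "u \<in> T")
      case True
      then have "?B \<inter> T = insert w ((B1 \<inter> T) - {u})" using uw by blast
      moreover have "w \<notin> (B1 \<inter> T) - {u}" using w by blast
      moreover have "u \<in> B1 \<inter> T" using u True by blast
      moreover have "card (B1 \<inter> T) > 0" using \<open>u \<in> B1 \<inter> T\<close> fB1 card_gt_0_iff by blast
      ultimately show ?thesis using fB1 by simp
    next
      case False
      then have "?B \<inter> T = B1 \<inter> T" using uw by blast
      then show ?thesis by simp
    qed
    then show ?case using Suc.IH[OF B1' Suc(3) cn] by simp
  qed
  obtain B0 where B0: "B0 \<in> Bs" using ne by blast
  have s1: "\<forall>B\<in>Bs. card (B \<inter> T) = card (B0 \<inter> T)" using cT B0 by blast
  have s2: "\<forall>B\<in>Bs. card (B \<inter> (E - T)) = card (B0 \<inter> (E - T))"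
  proof
    fix B assume B: "B \<in> Bs"
    have "B \<inter> (E - T) = B - T" "B0 \<inter> (E - T) = B0 - T" using subE[OF B] subE[OF B0] by blast+
    moreover have "card B = card (B \<inter> T) + card (B - T)" using finB[OF B] card_Int_Diff by blast
    moreover have "card B0 = card (B0 \<inter> T) + card (B0 - T)" using finB[OF B0] card_Int_Diff by blast
    moreover have "card B = card B0" using card_eq[OF B B0] .
    ultimately show "card (B \<inter> (E - T)) = card (B0 \<inter> (E - T))" using s1 B by simp
  qed
  have "rk Bs T + rk Bs (E - T) = rk Bs E"
  proof -
    have "rk Bs T = card (B0 \<inter> T)" using rk_const[OF s1] .
    moreover have "rk Bs (E - T) = card (B0 \<inter> (E - T))" using rk_const[OF s2] .
    moreover have "B0 \<inter> (E - T) = B0 - T" using subE[OF B0] by blast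
    moreover have "card B0 = card (B0 \<inter> T) + card (B0 - T)" using finB[OF B0] card_Int_Diff by blast
    ultimately show ?thesis using rk_E[OF B0] by simp
  qed
  moreover have "x \<in> T" using x unfolding T_def by simp
  moreover have "T \<subseteq> E" unfolding T_def by blast
  ultimately have "T = E" using conn unfolding connected_matroid_def by blast
  then show ?thesis using y unfolding T_def by blast
qed

end


context mat begin

lemma aff_ind: "B \<subseteq> E \<Longrightarrow> aff E a c (indicator B) = c + (\<Sum>e\<in>B. a e)"
proof -
  assume B: "B \<subseteq> E"
  have "(\<Sum>e\<in>E. a e * indicator B e) = (\<Sum>e\<in>E. if e \<in> B then a e else 0)" by (intro sum.cong) (auto simp: indicator_def)
  then have "(\<Sum>e\<in>E. a e * indicator B e) = sum a (E \<inter> B)" using sum.inter_restrict[OF finE, of a B] by simp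
  moreover have "E \<inter> B = B" using B by blast
  ultimately show ?thesis unfolding aff_def by simp
qed

lemma sumF: "finite F \<Longrightarrow> (\<Sum>e\<in>F. (indicator B e :: real)) = real (card (B \<inter> F))"
  unfolding indicator_def using sum.inter_restrict[of F "\<lambda>_. (1::real)" B] by (simp add: Int_commute of_bool_def)

lemma sum_a0: "finite B \<Longrightarrow> (\<Sum>e\<in>B. (if e \<in> F then -1 else 0 :: real)) = - real (card (B \<inter> F))"
  using sum.inter_restrict[of B "\<lambda>_. (-1::real)" F] by simp

lemma facet_flacet:
  assumes F: "F \<subseteq> E"
    and cF: "connected_matroid F (restrict_bases Bs F)"
    and cC: "connected_matroid (E - F) (contract_bases Bs F)"
    and two: "card ((\<lambda>x. \<Sum>e\<in>F. x e) ` vertices Bs) \<ge> 2"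
  shows "facet_defining E (vertices Bs) (\<lambda>e. if e \<in> F then -1 else 0) (real (rk Bs F)) \<and>
         card (aff E (\<lambda>e. if e \<in> F then -1 else 0) (real (rk Bs F)) ` vertices Bs) =
         card ((\<lambda>x. \<Sum>e\<in>F. x e) ` vertices Bs)"
proof -
  define a0 :: "'a \<Rightarrow> real" where "a0 = (\<lambda>e. if e \<in> F then -1 else 0)"
  define c0 :: real where "c0 = real (rk Bs F)"
  define V where "V = vertices Bs"
  define lF :: "('a \<Rightarrow> real) \<Rightarrow> real" where "lF = (\<lambda>x. \<Sum>e\<in>F. x e)"
  have fF: "finite F" using F finE finite_subset by blast
  have affB: "aff E a0 c0 (indicator B) = real (rk Bs F) - real (card (B \<inter> F))" if B: "B \<in> Bs" for B
    using aff_ind[OF subE[OF B], of a0 c0] sum_a0[OF finB[OF B], of F] unfolding a0_def c0_def by simp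
  have lFB: "lF (indicator B) = real (card (B \<inter> F))" for B
    unfolding lF_def using sumF[OF fF] by simp
  have cle: "card (B \<inter> F) \<le> rk Bs F" if B: "B \<in> Bs" for B
  proof -
    have "indep Bs (B \<inter> F)" using indep_sub[OF base_indep[OF B]] by blast
    then show ?thesis using rk_ge[OF Int_lower2] by blast
  qed
  have nonneg: "\<forall>v\<in>V. aff E a0 c0 v \<ge> 0"
    unfolding V_def vertices_def using affB cle by auto
  define Zb where "Zb = {B\<in>Bs. card (B \<inter> F) = rk Bs F}"
  have Zeq: "{v\<in>V. aff E a0 c0 v = 0} = (\<lambda>B. (indicator B :: 'a \<Rightarrow> real)) ` Zb"
  proof
    show "{v\<in>V. aff E a0 c0 v = 0} \<subseteq> (\<lambda>B. (indicator B :: 'a \<Rightarrow> real)) ` Zb"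
    proof
      fix v assume "v \<in> {v\<in>V. aff E a0 c0 v = 0}"
      then obtain B where B: "B \<in> Bs" "v = indicator B" "aff E a0 c0 v = 0" unfolding V_def vertices_def by blast
      then have "card (B \<inter> F) = rk Bs F" using affB[OF B(1)] by simp
      then show "v \<in> (\<lambda>B. (indicator B :: 'a \<Rightarrow> real)) ` Zb" using B unfolding Zb_def by blast
    qed
  next
    show "(\<lambda>B. (indicator B :: 'a \<Rightarrow> real)) ` Zb \<subseteq> {v\<in>V. aff E a0 c0 v = 0}"
    proof
      fix v assume "v \<in> (\<lambda>B. (indicator B :: 'a \<Rightarrow> real)) ` Zb"
      then obtain B where B: "B \<in> Bs" "card (B \<inter> F) = rk Bs F" "v = indicator B" unfolding Zb_def by blast
      then show "v \<in> {v\<in>V. aff E a0 c0 v = 0}" using affB[OF B(1)] unfolding V_def vertices_def by simp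
    qed
  qed
  obtain B0 where B0: "B0 \<in> Bs" "card (B0 \<inter> F) = rk Bs F" using exists_max_base by blast
  have B0Z: "B0 \<in> Zb" using B0 unfolding Zb_def by simp
  have lFV: "lF ` V = (\<lambda>B. real (card (B \<inter> F))) ` Bs"
    unfolding V_def vertices_def image_comp comp_def using lFB by simp
  have affV: "aff E a0 c0 ` V = (\<lambda>u. real (rk Bs F) - u) ` (lF ` V)"
    unfolding lFV unfolding V_def vertices_def image_comp comp_def using affB by simp
  have cardeq: "card (aff E a0 c0 ` V) = card (lF ` V)"
    unfolding affV by (rule card_image) (simp add: inj_on_def)
  have two': "card (lF ` V) \<ge> 2" using two unfolding lF_def V_def .
  have notall: "\<exists>B\<in>Bs. card (B \<inter> F) \<noteq> rk Bs F"
  proof (rule ccontr)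
    assume "\<not> ?thesis"
    then have "lF ` V \<subseteq> {real (rk Bs F)}" unfolding lFV by auto
    then have "card (lF ` V) \<le> card {real (rk Bs F)}" by (intro card_mono) simp_all
    then have "card (lF ` V) \<le> 1" by simp
    then show False using two' by simp
  qed
  have ZneV: "{v\<in>V. aff E a0 c0 v = 0} \<noteq> V"
  proof
    assume h: "{v\<in>V. aff E a0 c0 v = 0} = V"
    obtain B where B: "B \<in> Bs" "card (B \<inter> F) \<noteq> rk Bs F" using notall by blast
    have "indicator B \<in> V" using B(1) unfolding V_def vertices_def by blast
    then have "aff E a0 c0 (indicator B) = 0" using h by blast
    then show False using affB[OF B(1)] B(2) by simp
  qed
  have Fne: "F \<noteq> {}"
  proof
    assume "F = {}"
    then have "\<forall>B\<in>Bs. card (B \<inter> F) = rk Bs F" using rk_empty by simp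
    then show False using notall by blast
  qed
  have Cne: "E - F \<noteq> {}"
  proof
    assume h: "E - F = {}"
    have "card (B \<inter> F) = rk Bs F" if B: "B \<in> Bs" for B
    proof -
      have "B \<inter> F = B" using subE[OF B] h by blast
      moreover have "B0 \<inter> F = B0" using subE[OF B0(1)] h by blast
      ultimately show ?thesis using card_eq[OF B B0(1)] B0(2) by simp
    qed
    then show False using notall by blast
  qed
  have maxi: "Z' = {v\<in>V. aff E a0 c0 v = 0}"
    if Z'face: "is_face E V Z'" and Z'ne: "Z' \<noteq> V" and Zsub: "{v\<in>V. aff E a0 c0 v = 0} \<subseteq> Z'" for Z'
  proof -
    obtain a' c' where nn': "\<forall>v\<in>V. aff E a' c' v \<ge> 0" and Z'eq: "Z' = {v\<in>V. aff E a' c' v = 0}"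
      using Z'face unfolding is_face_def by blast
    define g where "g = (\<lambda>B. aff E a' c' (indicator B))"
    have gB: "g B = c' + sum a' B" if "B \<in> Bs" for B unfolding g_def using aff_ind[OF subE[OF that]] by simp
    have gZ: "g B = 0" if "B \<in> Zb" for B
    proof -
      have "indicator B \<in> {v\<in>V. aff E a0 c0 v = 0}" using Zeq that by blast
      then show ?thesis using Zsub Z'eq unfolding g_def by blast
    qed
    interpret r: mat F "restrict_bases Bs F" using restrict_matroid[OF F] by unfold_locales
    have Fstep: "a' x = a' y" if xy: "(x,y) \<in> r.exrel" for x y
    proof -
      obtain I where I: "I \<in> restrict_bases Bs F" "x \<in> I" "y \<in> F - I" "insert y (I - {x}) \<in> restrict_bases Bs F"
        using xy unfolding r.exrel_def by blast
      let ?I' = "insert y (I - {x})"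
      have Ip: "I \<subseteq> F" "indep Bs I" "card I = rk Bs F" using I(1) unfolding restrict_bases_def by auto
      have I'p: "?I' \<subseteq> F" "indep Bs ?I'" "card ?I' = rk Bs F" using I(4) unfolding restrict_bases_def by auto
      have m1: "(B0 - F) \<union> I \<in> Bs" using L1[OF B0(1) B0(2) Ip] .
      have m2: "(B0 - F) \<union> ?I' \<in> Bs" using L1[OF B0(1) B0(2) I'p] .
      have "((B0 - F) \<union> I) \<inter> F = I" using Ip(1) by blast
      then have z1: "(B0 - F) \<union> I \<in> Zb" using m1 Ip(3) unfolding Zb_def by simp
      have "((B0 - F) \<union> ?I') \<inter> F = ?I'" using I'p(1) by blast
      then have z2: "(B0 - F) \<union> ?I' \<in> Zb" using m2 I'p(3) unfolding Zb_def by simp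
      have fB0: "finite (B0 - F)" using finB[OF B0(1)] by simp
      have fI: "finite I" using indep_fin[OF Ip(2)] .
      have s1: "sum a' ((B0 - F) \<union> I) = sum a' (B0 - F) + sum a' I"
        using fB0 fI Ip(1) by (intro sum.union_disjoint) auto
      have s2: "sum a' ((B0 - F) \<union> ?I') = sum a' (B0 - F) + sum a' ?I'"
        using fB0 fI I'p(1) by (intro sum.union_disjoint) auto
      have "sum a' I = sum a' ?I'" using gZ[OF z1] gZ[OF z2] gB[OF m1] gB[OF m2] s1 s2 by simp
      moreover have "sum a' I = a' x + sum a' (I - {x})" using fI I(2) by (simp add: sum.remove)
      moreover have "sum a' ?I' = a' y + sum a' (I - {x})" using fI I(3) by simp
      ultimately show ?thesis by simp
    qed
    have Fconst: "a' x = a' y" if "x \<in> F" "y \<in> F" for x y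
    proof -
      have "(x,y) \<in> r.exrel\<^sup>*" using r.conn_exrel[OF cF that] .
      then show ?thesis
      proof (induction rule: rtrancl_induct)
        case base then show ?case by simp
      next
        case (step y z) then show ?case using Fstep by simp
      qed
    qed
    interpret q: mat "E - F" "contract_bases Bs F" using contract_matroid[OF F] by unfold_locales
    have I0p: "B0 \<inter> F \<subseteq> F" "indep Bs (B0 \<inter> F)" "card (B0 \<inter> F) = rk Bs F"
      using indep_sub[OF base_indep[OF B0(1)]] B0(2) by auto
    have liftK: "(B - F) \<union> (B0 \<inter> F) \<in> Zb \<and> sum a' ((B - F) \<union> (B0 \<inter> F)) = sum a' (B - F) + sum a' (B0 \<inter> F)"
      if B: "B \<in> Bs" "card (B \<inter> F) = rk Bs F" for B
    proof
      have m: "(B - F) \<union> (B0 \<inter> F) \<in> Bs" using L1[OF B I0p] .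
      have "((B - F) \<union> (B0 \<inter> F)) \<inter> F = B0 \<inter> F" by blast
      then show "(B - F) \<union> (B0 \<inter> F) \<in> Zb" using m B0(2) unfolding Zb_def by simp
      show "sum a' ((B - F) \<union> (B0 \<inter> F)) = sum a' (B - F) + sum a' (B0 \<inter> F)"
        using finB[OF B(1)] finB[OF B0(1)] by (intro sum.union_disjoint) auto
    qed
    have Cstep: "a' x = a' y" if xy: "(x,y) \<in> q.exrel" for x y
    proof -
      obtain K where K: "K \<in> contract_bases Bs F" "x \<in> K" "y \<in> (E - F) - K" "insert y (K - {x}) \<in> contract_bases Bs F"
        using xy unfolding q.exrel_def by blast
      let ?K' = "insert y (K - {x})"
      obtain B where B: "B \<in> Bs" "card (B \<inter> F) = rk Bs F" "K = B - F" using K(1) unfolding contract_bases_def by blast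
      obtain B' where B': "B' \<in> Bs" "card (B' \<inter> F) = rk Bs F" "?K' = B' - F" using K(4) unfolding contract_bases_def by blast
      have L: "(B - F) \<union> (B0 \<inter> F) \<in> Zb" "sum a' ((B - F) \<union> (B0 \<inter> F)) = sum a' (B - F) + sum a' (B0 \<inter> F)"
        using liftK[OF B(1) B(2)] by blast+
      have L': "(B' - F) \<union> (B0 \<inter> F) \<in> Zb" "sum a' ((B' - F) \<union> (B0 \<inter> F)) = sum a' (B' - F) + sum a' (B0 \<inter> F)"
        using liftK[OF B'(1) B'(2)] by blast+
      have Lb: "(B - F) \<union> (B0 \<inter> F) \<in> Bs" using L(1) unfolding Zb_def by blast
      have Lb': "(B' - F) \<union> (B0 \<inter> F) \<in> Bs" using L'(1) unfolding Zb_def by blast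
      have "c' + (sum a' (B - F) + sum a' (B0 \<inter> F)) = 0" using gZ[OF L(1)] gB[OF Lb] L(2) by simp
      moreover have "c' + (sum a' (B' - F) + sum a' (B0 \<inter> F)) = 0" using gZ[OF L'(1)] gB[OF Lb'] L'(2) by simp
      ultimately have e1: "sum a' K = sum a' ?K'" using B(3) B'(3) by simp
      have fK: "finite K" using finB[OF B(1)] B(3) by simp
      have "sum a' K = a' x + sum a' (K - {x})" using fK K(2) by (simp add: sum.remove)
      moreover have "sum a' ?K' = a' y + sum a' (K - {x})" using fK K(3) by simp
      ultimately show ?thesis using e1 by simp
    qed
    have Cconst: "a' x = a' y" if "x \<in> E - F" "y \<in> E - F" for x y
    proof -
      have "(x,y) \<in> q.exrel\<^sup>*" using q.conn_exrel[OF cC that] .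
      then show ?thesis
      proof (induction rule: rtrancl_induct)
        case base then show ?case by simp
      next
        case (step y z) then show ?case using Cstep by simp
      qed
    qed
    obtain f0 where f0: "f0 \<in> F" using Fne by blast
    obtain h0 where h0: "h0 \<in> E - F" using Cne by blast
    define \<alpha> where "\<alpha> = a' f0"
    define \<beta> where "\<beta> = a' h0"
    have gform: "g B = c' + \<alpha> * real (card (B \<inter> F)) + \<beta> * (real (rk Bs E) - real (card (B \<inter> F)))"
      if B: "B \<in> Bs" for B
    proof -
      have fB: "finite B" using finB[OF B] .
      have "sum a' B = sum a' (B \<inter> F) + sum a' (B - F)" using sum.Int_Diff[OF fB] .
      moreover have "sum a' (B \<inter> F) = sum (\<lambda>_. \<alpha>) (B \<inter> F)"
      proof (rule sum.cong)
        fix x assume "x \<in> B \<inter> F"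
        then show "a' x = \<alpha>" using Fconst[of x f0] f0 unfolding \<alpha>_def by blast
      qed simp
      moreover have "sum a' (B - F) = sum (\<lambda>_. \<beta>) (B - F)"
      proof (rule sum.cong)
        fix x assume "x \<in> B - F"
        then have "x \<in> E - F" using subE[OF B] by blast
        then show "a' x = \<beta>" using Cconst[of x h0] h0 unfolding \<beta>_def by blast
      qed simp
      moreover have "sum (\<lambda>_. \<alpha>) (B \<inter> F) = \<alpha> * real (card (B \<inter> F))" by simp
      moreover have "sum (\<lambda>_. \<beta>) (B - F) = \<beta> * real (card (B - F))" by simp
      moreover have "card B = card (B \<inter> F) + card (B - F)" using fB card_Int_Diff by blast
      moreover have "card B = rk Bs E" using rk_E[OF B] by simp
      ultimately have "real (card (B - F)) = real (rk Bs E) - real (card (B \<inter> F))" by simp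
      then show ?thesis using gB[OF B] \<open>sum a' B = sum a' (B \<inter> F) + sum a' (B - F)\<close>
        \<open>sum a' (B \<inter> F) = sum (\<lambda>_. \<alpha>) (B \<inter> F)\<close> \<open>sum a' (B - F) = sum (\<lambda>_. \<beta>) (B - F)\<close> by simp
    qed
    have g0: "c' + \<alpha> * real (rk Bs F) + \<beta> * (real (rk Bs E) - real (rk Bs F)) = 0"
      using gZ[OF B0Z] gform[OF B0(1)] B0(2) by simp
    show ?thesis
    proof
      show "{v\<in>V. aff E a0 c0 v = 0} \<subseteq> Z'" using Zsub .
      show "Z' \<subseteq> {v\<in>V. aff E a0 c0 v = 0}"
      proof
        fix v assume vZ: "v \<in> Z'"
        then obtain B where B: "B \<in> Bs" "v = indicator B" using Z'eq unfolding V_def vertices_def by blast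
        have gB0: "g B = 0" using vZ Z'eq B(2) unfolding g_def by blast
        show "v \<in> {v\<in>V. aff E a0 c0 v = 0}"
        proof (cases "card (B \<inter> F) = rk Bs F")
          case True
          then show ?thesis using Zeq B unfolding Zb_def by blast
        next
          case False
          define t where "t = real (card (B \<inter> F))"
          define s where "s = real (rk Bs F)"
          define rr where "rr = real (rk Bs E)"
          have e1: "c' + \<alpha> * t + \<beta> * (rr - t) = 0" using gB0 gform[OF B(1)] unfolding t_def rr_def by simp
          have e2: "c' + \<alpha> * s + \<beta> * (rr - s) = 0" using g0 unfolding s_def rr_def by simp
          have "(\<alpha> - \<beta>) * (t - s) = (c' + \<alpha> * t + \<beta> * (rr - t)) - (c' + \<alpha> * s + \<beta> * (rr - s))"
            by (simp add: algebra_simps)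
          then have "(\<alpha> - \<beta>) * (t - s) = 0" using e1 e2 by simp
          moreover have "t \<noteq> s" using False unfolding t_def s_def by simp
          ultimately have ab: "\<alpha> = \<beta>" by simp
          have "Z' = V"
          proof
            show "Z' \<subseteq> V" using Z'eq by blast
            show "V \<subseteq> Z'"
            proof
              fix w assume "w \<in> V"
              then obtain B' where B': "B' \<in> Bs" "w = indicator B'" unfolding V_def vertices_def by blast
              have "g B' = c' + \<alpha> * rr" using gform[OF B'(1)] ab unfolding rr_def by (simp add: algebra_simps)
              moreover have "c' + \<alpha> * rr = 0" using e2 ab by (simp add: algebra_simps)
              ultimately show "w \<in> Z'" using Z'eq B' \<open>w \<in> V\<close> unfolding g_def by simp
            qed
          qed
          then show ?thesis using Z'ne by simp
        qed
      qed
    qed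
  qed
  have "is_face E V {v\<in>V. aff E a0 c0 v = 0}" unfolding is_face_def using nonneg by blast
  then have "is_facet E V {v\<in>V. aff E a0 c0 v = 0}" unfolding is_facet_def using ZneV maxi by blast
  then have "facet_defining E V a0 c0" unfolding facet_defining_def using nonneg by blast
  then show ?thesis using cardeq unfolding a0_def c0_def V_def lF_def by simp
qed

end


definition connr :: "'a set \<Rightarrow> ('a set \<Rightarrow> nat) \<Rightarrow> bool" where
  "connr G \<rho> \<longleftrightarrow> \<not> (\<exists>S. S \<noteq> {} \<and> S \<subset> G \<and> \<rho> S + \<rho> (G - S) = \<rho> G)"

lemma tutte:
  fixes \<rho> :: "'a set \<Rightarrow> nat"
  assumes sm: "\<And>X Y. X \<subseteq> G \<Longrightarrow> Y \<subseteq> G \<Longrightarrow> \<rho> (X \<union> Y) + \<rho> (X \<inter> Y) \<le> \<rho> X + \<rho> Y"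
    and mono: "\<And>X Y. X \<subseteq> Y \<Longrightarrow> Y \<subseteq> G \<Longrightarrow> \<rho> X \<le> \<rho> Y"
    and e0: "\<rho> {} = 0" and e: "e \<in> G" and re: "\<rho> {e} \<le> 1" and nc: "\<rho> (G - {e}) = \<rho> G"
    and conn: "connr G \<rho>"
  shows "connr (G - {e}) \<rho> \<or> connr (G - {e}) (\<lambda>X. \<rho> (insert e X) - \<rho> {e})"
proof (rule ccontr)
  assume na: "\<not> ?thesis"
  then obtain A where A: "A \<noteq> {}" "A \<subset> G - {e}" "\<rho> A + \<rho> (G - {e} - A) = \<rho> (G - {e})"
    unfolding connr_def by blast
  from na obtain B where B: "B \<noteq> {}" "B \<subset> G - {e}"
    "(\<rho> (insert e B) - \<rho> {e}) + (\<rho> (insert e (G - {e} - B)) - \<rho> {e}) = \<rho> (insert e (G - {e})) - \<rho> {e}"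
    unfolding connr_def by blast
  define A' where "A' = G - {e} - A"
  define B' where "B' = G - {e} - B"
  have Ge: "insert e (G - {e}) = G" using e by blast
  have lam: "\<rho> G \<le> \<rho> X + \<rho> (G - X)" if "X \<subseteq> G" for X
  proof -
    have "\<rho> (X \<union> (G - X)) + \<rho> (X \<inter> (G - X)) \<le> \<rho> X + \<rho> (G - X)" using sm[OF that] by blast
    moreover have "X \<union> (G - X) = G" "X \<inter> (G - X) = {}" using that by blast+
    ultimately show ?thesis using e0 by simp
  qed
  have lam1: "\<rho> G + 1 \<le> \<rho> X + \<rho> (G - X)" if "X \<noteq> {}" "X \<subseteq> G - {e}" for X
  proof -
    have "X \<subset> G" using that e by auto
    have h: "\<not> (X \<noteq> {} \<and> X \<subset> G \<and> \<rho> X + \<rho> (G - X) = \<rho> G)"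
      using spec[OF conn[unfolded connr_def not_ex], of X] .
    then have "\<rho> X + \<rho> (G - X) \<noteq> \<rho> G" using \<open>X \<subset> G\<close> that(1) by simp
    moreover have "X \<subseteq> G" using that by blast
    ultimately show ?thesis using lam[OF \<open>X \<subseteq> G\<close>] by linarith
  qed
  have m1: "\<rho> {e} \<le> \<rho> (insert e B)" using mono[of "{e}" "insert e B"] B(2) e by blast
  have m2: "\<rho> {e} \<le> \<rho> (insert e B')" using mono[of "{e}" "insert e B'"] e unfolding B'_def by blast
  have m3: "\<rho> {e} \<le> \<rho> G" using mono[of "{e}" G] e by blast
  have Beq: "\<rho> (insert e B) + \<rho> (insert e B') = \<rho> G + \<rho> {e}"
    using B(3) m1 m2 m3 unfolding B'_def[symmetric] Ge by linarith
  have Aeq: "\<rho> A + \<rho> A' = \<rho> G" using A(3) nc unfolding A'_def by simp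
  have AG: "A \<subseteq> G" and A'G: "A' \<subseteq> G" and BG: "B \<subseteq> G" and B'G: "B' \<subseteq> G"
    and eBG: "insert e B \<subseteq> G" and eB'G: "insert e B' \<subseteq> G"
    using A(2) B(2) e unfolding A'_def B'_def by blast+
  have s1: "\<rho> (A \<union> insert e B) + \<rho> (A \<inter> insert e B) \<le> \<rho> A + \<rho> (insert e B)" using sm[OF AG eBG] .
  have s2: "\<rho> (A' \<union> insert e B') + \<rho> (A' \<inter> insert e B') \<le> \<rho> A' + \<rho> (insert e B')" using sm[OF A'G eB'G] .
  have s3: "\<rho> (A \<union> insert e B') + \<rho> (A \<inter> insert e B') \<le> \<rho> A + \<rho> (insert e B')" using sm[OF AG eB'G] .
  have s4: "\<rho> (A' \<union> insert e B) + \<rho> (A' \<inter> insert e B) \<le> \<rho> A' + \<rho> (insert e B)" using sm[OF A'G eBG] .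
  have i1: "A \<inter> insert e B = A \<inter> B" "A' \<inter> insert e B' = A' \<inter> B'" "A \<inter> insert e B' = A \<inter> B'" "A' \<inter> insert e B = A' \<inter> B"
    using A(2) unfolding A'_def B'_def by blast+
  have u1: "A \<union> insert e B = G - (A' \<inter> B')" "A' \<union> insert e B' = G - (A \<inter> B)"
    "A \<union> insert e B' = G - (A' \<inter> B)" "A' \<union> insert e B = G - (A \<inter> B')"
    using A(2) B(2) e unfolding A'_def B'_def by blast+
  have sub: "A \<inter> B \<subseteq> G - {e}" "A' \<inter> B' \<subseteq> G - {e}" "A \<inter> B' \<subseteq> G - {e}" "A' \<inter> B \<subseteq> G - {e}"
    unfolding A'_def B'_def using A(2) by blast+
  have t1: "\<rho> (G - (A' \<inter> B')) + \<rho> (A \<inter> B) \<le> \<rho> A + \<rho> (insert e B)" using s1 unfolding i1(1) u1(1) .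
  have t2: "\<rho> (G - (A \<inter> B)) + \<rho> (A' \<inter> B') \<le> \<rho> A' + \<rho> (insert e B')" using s2 unfolding i1(2) u1(2) .
  have t3: "\<rho> (G - (A' \<inter> B)) + \<rho> (A \<inter> B') \<le> \<rho> A + \<rho> (insert e B')" using s3 unfolding i1(3) u1(3) .
  have t4: "\<rho> (G - (A \<inter> B')) + \<rho> (A' \<inter> B) \<le> \<rho> A' + \<rho> (insert e B)" using s4 unfolding i1(4) u1(4) .
  have c1: "A \<inter> B = {} \<or> A' \<inter> B' = {}"
  proof (rule ccontr)
    assume "\<not> ?thesis"
    then have n: "A \<inter> B \<noteq> {}" "A' \<inter> B' \<noteq> {}" by simp_all
    have "\<rho> G + 1 \<le> \<rho> (A \<inter> B) + \<rho> (G - (A \<inter> B))" using lam1[OF n(1) sub(1)] .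
    moreover have "\<rho> G + 1 \<le> \<rho> (A' \<inter> B') + \<rho> (G - (A' \<inter> B'))" using lam1[OF n(2) sub(2)] .
    ultimately show False using t1 t2 Aeq Beq re by linarith
  qed
  have c2: "A \<inter> B' = {} \<or> A' \<inter> B = {}"
  proof (rule ccontr)
    assume "\<not> ?thesis"
    then have n: "A \<inter> B' \<noteq> {}" "A' \<inter> B \<noteq> {}" by simp_all
    have "\<rho> G + 1 \<le> \<rho> (A \<inter> B') + \<rho> (G - (A \<inter> B'))" using lam1[OF n(1) sub(3)] .
    moreover have "\<rho> G + 1 \<le> \<rho> (A' \<inter> B) + \<rho> (G - (A' \<inter> B))" using lam1[OF n(2) sub(4)] .
    ultimately show False using t3 t4 Aeq Beq re by linarith
  qed
  have ne: "A' \<noteq> {}" "B' \<noteq> {}" using A(2) B(2) unfolding A'_def B'_def by blast+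
  have d: "A = (A \<inter> B) \<union> (A \<inter> B')" "A' = (A' \<inter> B) \<union> (A' \<inter> B')" "B = (A \<inter> B) \<union> (A' \<inter> B)" "B' = (A \<inter> B') \<union> (A' \<inter> B')"
    using A(2) B(2) unfolding A'_def B'_def by blast+
  show False
  proof (cases "A \<inter> B = {}")
    case True
    show False
    proof (cases "A \<inter> B' = {}")
      case True
      then show False using \<open>A \<inter> B = {}\<close> d(1) A(1) by simp
    next
      case False
      then have "A' \<inter> B = {}" using c2 by simp
      then show False using \<open>A \<inter> B = {}\<close> d(3) B(1) by simp
    qed
  next
    case False
    then have "A' \<inter> B' = {}" using c1 by simp
    show False
    proof (cases "A \<inter> B' = {}")
      case True
      then show False using \<open>A' \<inter> B' = {}\<close> d(4) ne(2) by simp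
    next
      case False
      then have "A' \<inter> B = {}" using c2 by simp
      then show False using \<open>A' \<inter> B' = {}\<close> d(2) ne(1) by simp
    qed
  qed
qed



lemma lev_lb:
  assumes fin: "finite Bs" and fd: "facet_defining E (vertices Bs) a c"
  shows "card (aff E a c ` vertices Bs) \<le> levelness E Bs"
proof -
  let ?P = "\<lambda>k. \<forall>a c. facet_defining E (vertices Bs) a c \<longrightarrow> card (aff E a c ` vertices Bs) \<le> k"
  have finV: "finite (vertices Bs)" unfolding vertices_def using fin by simp
  have "?P (card (vertices Bs))" using card_image_le[OF finV] by blast
  then have "?P (levelness E Bs)" unfolding levelness_def by (rule LeastI)
  then show ?thesis using fd by blast
qed

lemma conn_cong:
  assumes "\<And>X. X \<subseteq> S \<Longrightarrow> rk A X = f X"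
  shows "connected_matroid S A \<longleftrightarrow> connr S f"
proof -
  have "(S' \<noteq> {} \<and> S' \<subset> S \<and> rk A S' + rk A (S - S') = rk A S) \<longleftrightarrow> (S' \<noteq> {} \<and> S' \<subset> S \<and> f S' + f (S - S') = f S)" for S'
  proof (cases "S' \<subset> S")
    case True
    then have "rk A S' = f S'" "rk A (S - S') = f (S - S')" "rk A S = f S" using assms by auto
    then show ?thesis by simp
  qed simp
  then show ?thesis unfolding connected_matroid_def connr_def by simp
qed

lemma conn_rk_eq:
  assumes "\<And>X. X \<subseteq> S \<Longrightarrow> rk A X = rk B X"
  shows "connected_matroid S A \<longleftrightarrow> connected_matroid S B"
  using conn_cong[of S A "rk B"] conn_cong[of S B "rk B"] assms by simp

lemma level_ge:
  assumes m: "matroid E Bs" and F: "F \<subseteq> E"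
    and cF: "connected_matroid F (restrict_bases Bs F)"
    and cC: "connected_matroid (E - F) (contract_bases Bs F)"
    and two: "card ((\<lambda>x. \<Sum>e\<in>F. x e) ` vertices Bs) \<ge> 2"
  shows "card ((\<lambda>x. \<Sum>e\<in>F. x e) ` vertices Bs) \<le> levelness E Bs"
proof -
  interpret mat E Bs using m by unfold_locales
  have finBs: "finite Bs"
  proof -
    have "Bs \<subseteq> Pow E" using subE by blast
    then show ?thesis using finE by (simp add: finite_subset)
  qed
  from facet_flacet[OF F cF cC two] lev_lb[OF finBs] show ?thesis by metis
qed

lemma empty_minor_level:
  assumes m: "matroid E Bs"
  shows "1 \<le> levelness {} (restrict_bases (contract_bases Bs {}) {})"
proof -
  interpret mat E Bs using m by unfold_locales
  have cb: "contract_bases Bs {} = Bs" unfolding contract_bases_def using rk_empty by simp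
  have rb: "restrict_bases Bs {} = {{}}" unfolding restrict_bases_def using rk_empty indep_empty by auto
  define p :: "'a \<Rightarrow> real" where "p = indicator {}"
  have V: "vertices {{}} = {p}" unfolding vertices_def p_def by simp
  have aff1: "aff {} (\<lambda>_. 0) 1 v = 1" for v :: "'a \<Rightarrow> real" unfolding aff_def by simp
  have Z: "{v\<in>{p}. aff {} (\<lambda>_. 0) 1 v = 0} = {}" using aff1 by simp
  have face: "is_face {} {p} {}" unfolding is_face_def using Z aff1 by (metis zero_le_one)
  have facet: "is_facet {} {p} {}"
    unfolding is_facet_def
  proof (intro conjI allI impI)
    show "is_face {} {p} {}" using face .
    show "{} \<noteq> {p}" by simp
    fix Z' assume h: "is_face {} {p} Z' \<and> Z' \<noteq> {p} \<and> {} \<subseteq> Z'"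
    then have "Z' \<subseteq> {p}" unfolding is_face_def by blast
    then show "Z' = {}" using h by blast
  qed
  have fd: "facet_defining {} {p} (\<lambda>_. 0) 1" unfolding facet_defining_def using Z facet aff1 by simp
  have c1: "card (aff {} (\<lambda>_. 0) 1 ` {p}) = 1" by simp
  have l: "card (aff {} (\<lambda>_. 0) 1 ` {p}) \<le> levelness ({}::'a set) ({{}}::'a set set)"
    using lev_lb[of "{{}} :: 'a set set" "{}" "\<lambda>_. 0" 1, unfolded V] fd by simp
  show ?thesis unfolding cb rb using l c1 by simp
qed



theorem proposition6p4:
  fixes E :: "'a set" and Bs :: "'a set set" and F :: "'a set" and k :: nat
  assumes "matroid E Bs"
    and "minimally_level E Bs k"
    and "k_level_flacet E Bs k F"
  shows "rk Bs (E - F) = card (E - F)"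
proof (rule ccontr)
  assume neq: "rk Bs (E - F) \<noteq> card (E - F)"
  interpret mat E Bs using assms(1) by unfold_locales
  have fl: "F \<noteq> {}" "F \<subset> E" "flat E Bs F" and cF: "connected_matroid F (restrict_bases Bs F)"
    and cC: "connected_matroid (E - F) (contract_bases Bs F)"
    and kv: "card ((\<lambda>x. \<Sum>e\<in>F. x e) ` vertices Bs) = k"
    using assms(3) unfolding k_level_flacet_def flacet_def by auto
  have minor: "levelness E' Bs' < k" if "proper_minor E Bs E' Bs'" for E' Bs'
    using assms(2) that unfolding minimally_level_def by blast
  have FE: "F \<subseteq> E" using fl(2) by blast
  have "proper_minor E Bs {} (restrict_bases (contract_bases Bs {}) {})"
    unfolding proper_minor_def
  proof (intro exI conjI)
    show "{} \<subseteq> E" "E \<subseteq> E" "{} \<inter> E = {}" by auto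
    show "{} \<union> E \<noteq> {}" using FE fl(1) by blast
    show "{} = E - {} - E" by simp
    show "restrict_bases (contract_bases Bs {}) {} = restrict_bases (contract_bases Bs {}) (E - {} - E)" by simp
  qed
  then have "levelness {} (restrict_bases (contract_bases Bs {}) {}) < k" by (rule minor)
  then have k2: "2 \<le> k" using empty_minor_level[OF assms(1)] by linarith
  have kM: "k = rk Bs F + 1 - (rk Bs E - rk Bs (E - F))" using card_values[OF FE] kv by simp
  have finEF: "finite (E - F)" using finE by simp
  obtain I where I: "I \<subseteq> E - F" "indep Bs I" "card I = rk Bs (E - F)" using rk_obtain by blast
  have "I \<noteq> E - F" using I(3) neq by auto
  then obtain e where e: "e \<in> E - F" "e \<notin> I" using I(1) by blast
  have eE: "e \<in> E" "e \<notin> F" using e(1) by auto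
  have rkFe: "rk Bs (E - F - {e}) = rk Bs (E - F)"
  proof (rule antisym)
    show "rk Bs (E - F - {e}) \<le> rk Bs (E - F)" by (rule rk_mono) blast
    have "I \<subseteq> E - F - {e}" using I(1) e(2) by blast
    then show "rk Bs (E - F) \<le> rk Bs (E - F - {e})" using rk_ge[OF _ I(2)] I(3) by simp
  qed
  have rkEe: "rk Bs (E - {e}) = rk Bs E"
  proof (rule antisym)
    show "rk Bs (E - {e}) \<le> rk Bs E" by (rule rk_mono) blast
    have "rk Bs ((E - {e}) \<union> (E - F)) + rk Bs ((E - {e}) \<inter> (E - F)) \<le> rk Bs (E - {e}) + rk Bs (E - F)"
      by (rule submod)
    moreover have "(E - {e}) \<union> (E - F) = E" using eE by blast
    moreover have "(E - {e}) \<inter> (E - F) = E - F - {e}" by blast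
    ultimately show "rk Bs E \<le> rk Bs (E - {e})" using rkFe by simp
  qed
  have flat1: "rk Bs F < rk Bs (insert e F)" using fl(3) e(1) unfolding flat_def by blast
  have rkYe: "rk Bs (insert e Y) = rk Bs Y + 1" if Y: "Y \<subseteq> F" for Y
  proof (rule antisym)
    show "rk Bs (insert e Y) \<le> rk Bs Y + 1" by (rule rk_insert)
    have "rk Bs ((insert e Y) \<union> F) + rk Bs ((insert e Y) \<inter> F) \<le> rk Bs (insert e Y) + rk Bs F"
      by (rule submod)
    moreover have "(insert e Y) \<union> F = insert e F" using Y by blast
    moreover have "(insert e Y) \<inter> F = Y" using Y eE(2) by blast
    ultimately show "rk Bs Y + 1 \<le> rk Bs (insert e Y)" using flat1 by simp
  qed
  have rke: "rk Bs {e} = 1" using rkYe[of "{}"] rk_empty by simp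
  define \<rho> where "\<rho> = (\<lambda>X. rk Bs (X \<union> F) - rk Bs F)"
  have mF: "rk Bs F \<le> rk Bs (X \<union> F)" for X by (rule rk_mono) blast
  have \<rho>sm: "\<rho> (X \<union> Y) + \<rho> (X \<inter> Y) \<le> \<rho> X + \<rho> Y" if "X \<subseteq> E - F" "Y \<subseteq> E - F" for X Y
  proof -
    have "rk Bs ((X \<union> F) \<union> (Y \<union> F)) + rk Bs ((X \<union> F) \<inter> (Y \<union> F)) \<le> rk Bs (X \<union> F) + rk Bs (Y \<union> F)"
      by (rule submod)
    moreover have "(X \<union> F) \<union> (Y \<union> F) = (X \<union> Y) \<union> F" "(X \<union> F) \<inter> (Y \<union> F) = (X \<inter> Y) \<union> F" by blast+
    ultimately have h: "rk Bs ((X \<union> Y) \<union> F) + rk Bs ((X \<inter> Y) \<union> F) \<le> rk Bs (X \<union> F) + rk Bs (Y \<union> F)" by simp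
    show ?thesis unfolding \<rho>_def using h mF[of "X \<union> Y"] mF[of "X \<inter> Y"] mF[of X] mF[of Y] by arith
  qed
  have \<rho>mono: "\<rho> X \<le> \<rho> Y" if "X \<subseteq> Y" "Y \<subseteq> E - F" for X Y
  proof -
    have "rk Bs (X \<union> F) \<le> rk Bs (Y \<union> F)" using that(1) by (intro rk_mono) blast
    then show ?thesis unfolding \<rho>_def by simp
  qed
  have \<rho>0: "\<rho> {} = 0" unfolding \<rho>_def by simp
  have \<rho>e: "\<rho> {e} \<le> 1" unfolding \<rho>_def using rk_insert[of e F] by simp
  have \<rho>nc: "\<rho> (E - F - {e}) = \<rho> (E - F)"
  proof -
    have "(E - F - {e}) \<union> F = E - {e}" "(E - F) \<union> F = E" using eE FE by blast+
    then show ?thesis unfolding \<rho>_def using rkEe by simp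
  qed
  have rkQ: "rk (contract_bases Bs F) X = \<rho> X" if "X \<subseteq> E - F" for X
  proof -
    have "X \<inter> F = {}" using that by blast
    from contract_rk[OF FE this] show ?thesis unfolding \<rho>_def by simp
  qed
  have connG: "connr (E - F) \<rho>" using cC conn_cong[of "E - F" "contract_bases Bs F" \<rho>] rkQ by blast
  have tt: "connr (E - F - {e}) \<rho> \<or> connr (E - F - {e}) (\<lambda>X. \<rho> (insert e X) - \<rho> {e})"
    by (rule tutte[OF \<rho>sm \<rho>mono \<rho>0 e(1) \<rho>e \<rho>nc connG])
  have FEe: "F \<subseteq> E - {e}" using FE eE(2) by blast
  have EeF: "E - {e} - F = E - F - {e}" by blast
  have rFEF: "rk Bs F \<le> rk Bs E" "rk Bs (E - F) \<le> rk Bs E" using rk_mono[OF FE] rk_mono[of "E - F" E] by auto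
  show False
  proof (cases "connr (E - F - {e}) \<rho>")
    case True
    define BsD where "BsD = restrict_bases (contract_bases Bs {}) (E - {} - {e})"
    have cb0: "contract_bases Bs {} = Bs" unfolding contract_bases_def using rk_empty by simp
    have BsD': "BsD = restrict_bases Bs (E - {e})" unfolding BsD_def cb0 by simp
    have pm: "proper_minor E Bs (E - {e}) BsD"
      unfolding proper_minor_def
    proof (intro exI conjI)
      show "{} \<subseteq> E" "{e} \<subseteq> E" "{} \<inter> {e} = {}" "{} \<union> {e} \<noteq> {}" using eE by auto
      show "E - {e} = E - {} - {e}" by simp
      show "BsD = restrict_bases (contract_bases Bs {}) (E - {} - {e})" unfolding BsD_def ..
    qed
    have mD: "matroid (E - {e}) BsD" unfolding BsD' by (rule restrict_matroid) blast
    interpret d: mat "E - {e}" BsD using mD by unfold_locales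
    have rkD: "rk BsD X = rk Bs (X \<inter> (E - {e}))" for X unfolding BsD' by (rule restrict_rk)
    have rkD2: "rk BsD X = rk Bs X" if "X \<subseteq> E - {e}" for X
      using rkD[of X] that by (simp add: Int_absorb2)
    have c1: "connected_matroid F (restrict_bases BsD F)"
    proof -
      have "rk (restrict_bases BsD F) X = rk (restrict_bases Bs F) X" if "X \<subseteq> F" for X
        using d.restrict_rk[of F X] restrict_rk[of F X] rkD2[of "X \<inter> F"] FEe by auto
      then show ?thesis using conn_rk_eq[of F "restrict_bases BsD F" "restrict_bases Bs F"] cF by blast
    qed
    have c2: "connected_matroid (E - {e} - F) (contract_bases BsD F)"
    proof -
      have "rk (contract_bases BsD F) X = \<rho> X" if X: "X \<subseteq> E - {e} - F" for X
      proof -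
        have "X \<inter> F = {}" using X by blast
        from d.contract_rk[OF FEe this]
        have "rk (contract_bases BsD F) X + rk BsD F = rk BsD (X \<union> F)" .
        moreover have "rk BsD F = rk Bs F" using rkD2[OF FEe] .
        moreover have "rk BsD (X \<union> F) = rk Bs (X \<union> F)" using rkD2[of "X \<union> F"] X FEe by blast
        ultimately show ?thesis unfolding \<rho>_def by simp
      qed
      then show ?thesis using conn_cong[of "E - {e} - F" "contract_bases BsD F" \<rho>] True EeF by simp
    qed
    have vD: "card ((\<lambda>x. \<Sum>e\<in>F. x e) ` vertices BsD) = k"
    proof -
      have "card ((\<lambda>x. \<Sum>e\<in>F. x e) ` vertices BsD) = rk BsD F + 1 - (rk BsD (E - {e}) - rk BsD (E - {e} - F))"
        using d.card_values[OF FEe] .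
      moreover have "rk BsD F = rk Bs F" using rkD2[OF FEe] .
      moreover have "rk BsD (E - {e}) = rk Bs E" using rkD2[of "E - {e}"] rkEe by simp
      moreover have "rk BsD (E - {e} - F) = rk Bs (E - F)" using rkD2[of "E - {e} - F"] EeF rkFe by auto
      ultimately show ?thesis using kM by simp
    qed
    have "k \<le> levelness (E - {e}) BsD" using level_ge[OF mD FEe c1 c2] vD k2 by simp
    then show False using minor[OF pm] by simp
  next
    case False
    then have cc: "connr (E - F - {e}) (\<lambda>X. \<rho> (insert e X) - \<rho> {e})" using tt by blast
    define Q1 where "Q1 = contract_bases Bs {e}"
    define BsC where "BsC = restrict_bases (contract_bases Bs {e}) (E - {e} - {})"
    have pm: "proper_minor E Bs (E - {e}) BsC"
      unfolding proper_minor_def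
    proof (intro exI conjI)
      show "{e} \<subseteq> E" "{} \<subseteq> E" "{e} \<inter> {} = {}" "{e} \<union> {} \<noteq> {}" using eE by auto
      show "E - {e} = E - {e} - {}" by simp
      show "BsC = restrict_bases (contract_bases Bs {e}) (E - {e} - {})" unfolding BsC_def ..
    qed
    have BsC': "BsC = restrict_bases Q1 (E - {e})" unfolding BsC_def Q1_def by simp
    have eEs: "{e} \<subseteq> E" using eE by blast
    interpret q1: mat "E - {e}" Q1 unfolding Q1_def using contract_matroid[OF eEs] by unfold_locales
    have mC: "matroid (E - {e}) BsC" unfolding BsC' by (rule q1.restrict_matroid) blast
    interpret c: mat "E - {e}" BsC using mC by unfold_locales
    have rkQ1: "rk Q1 X = rk Bs (insert e X) - 1" if "X \<subseteq> E - {e}" for X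
    proof -
      have "X \<inter> {e} = {}" using that by blast
      from contract_rk[OF eEs this] have "rk Q1 X + rk Bs {e} = rk Bs (X \<union> {e})" unfolding Q1_def .
      then show ?thesis using rke by simp
    qed
    have rkC: "rk BsC X = rk Bs (insert e X) - 1" if "X \<subseteq> E - {e}" for X
    proof -
      have "rk BsC X = rk Q1 (X \<inter> (E - {e}))" unfolding BsC' by (rule q1.restrict_rk)
      then show ?thesis using rkQ1[OF that] that by (simp add: Int_absorb2)
    qed
    have c1: "connected_matroid F (restrict_bases BsC F)"
    proof -
      have "rk (restrict_bases BsC F) X = rk (restrict_bases Bs F) X" if "X \<subseteq> F" for X
      proof -
        have "rk (restrict_bases BsC F) X = rk BsC (X \<inter> F)" by (rule c.restrict_rk)
        also have "\<dots> = rk Bs (insert e (X \<inter> F)) - 1" using rkC[of "X \<inter> F"] FEe by blast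
        also have "\<dots> = rk Bs (X \<inter> F)" using rkYe[of "X \<inter> F"] by simp
        also have "\<dots> = rk (restrict_bases Bs F) X" using restrict_rk[of F X] by simp
        finally show ?thesis .
      qed
      then show ?thesis using conn_rk_eq[of F "restrict_bases BsC F" "restrict_bases Bs F"] cF by blast
    qed
    have c2: "connected_matroid (E - {e} - F) (contract_bases BsC F)"
    proof -
      have "rk (contract_bases BsC F) X = \<rho> (insert e X) - \<rho> {e}" if X: "X \<subseteq> E - {e} - F" for X
      proof -
        have "X \<inter> F = {}" using X by blast
        from c.contract_rk[OF FEe this]
        have h: "rk (contract_bases BsC F) X + rk BsC F = rk BsC (X \<union> F)" .
        have XF: "X \<union> F \<subseteq> E - {e}" using X FEe by blast
        have "rk BsC F = rk Bs (insert e F) - 1" using rkC[OF FEe] .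
        moreover have "rk BsC (X \<union> F) = rk Bs (insert e (X \<union> F)) - 1" using rkC[OF XF] .
        moreover have "insert e X \<union> F = insert e (X \<union> F)" "{e} \<union> F = insert e F" by blast+
        moreover have "rk Bs (insert e F) \<le> rk Bs (insert e (X \<union> F))" by (rule rk_mono) blast
        moreover have "rk Bs F \<le> rk Bs (insert e F)" by (rule rk_mono) blast
        moreover have "1 \<le> rk Bs (insert e F)" using flat1 by simp
        ultimately show ?thesis using h unfolding \<rho>_def by simp
      qed
      then show ?thesis using conn_cong[of "E - {e} - F" "contract_bases BsC F" "\<lambda>X. \<rho> (insert e X) - \<rho> {e}"] cc EeF by simp
    qed
    have vC: "card ((\<lambda>x. \<Sum>e\<in>F. x e) ` vertices BsC) = k"
    proof -
      have "card ((\<lambda>x. \<Sum>e\<in>F. x e) ` vertices BsC) = rk BsC F + 1 - (rk BsC (E - {e}) - rk BsC (E - {e} - F))"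
        using c.card_values[OF FEe] .
      moreover have "rk BsC F = rk Bs F" using rkC[OF FEe] rkYe[of F] by simp
      moreover have "rk BsC (E - {e}) = rk Bs E - 1"
      proof -
        have "insert e (E - {e}) = E" using eE by blast
        then show ?thesis using rkC[of "E - {e}"] by simp
      qed
      moreover have "rk BsC (E - {e} - F) = rk Bs (E - F) - 1"
      proof -
        have "insert e (E - {e} - F) = E - F" using e(1) by blast
        moreover have "E - {e} - F \<subseteq> E - {e}" by blast
        ultimately show ?thesis using rkC[of "E - {e} - F"] by simp
      qed
      moreover have "1 \<le> rk Bs (E - F)"
      proof -
        have "rk Bs {e} \<le> rk Bs (E - F)" by (rule rk_mono) (use e(1) in blast)
        then show ?thesis using rke by simp
      qed
      ultimately show ?thesis using kM rFEF by simp
    qed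
    have "k \<le> levelness (E - {e}) BsC" using level_ge[OF mC FEe c1 c2] vC k2 by simp
    then show False using minor[OF pm] by simp
  qed
qed


end
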